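(* For $n\ge1$, the number of distinct Segre symbols $\tilde\sigma_A$ of elements $A\in O(n+1)$ equals $$s(n)=\sum_{j=0}^{[(n+1)/2]} p(j)\Big(\Big[\tfrac{n+1}{2}\Big]-j+1\Big),$$ where $p(k)$ is the number of partitions of $k$ ($p(0)=1$) and $[x]$ is the integer part.
   Context: Segre symbol of an orthogonal map $A$: $\tilde\sigma_A$ consists of (a) the multiset of $\dim_{\mathbb C}\ker(A-\lambda)$ over the distinct conjugate pairs $\{\lambda,\bar\lambda\}$ of non-real eigenvalues of $A$, and (b) the multiset of $\dim\ker(A-\varepsilon)$ over those $\varepsilon\in\{1,-1\}$ which are eigenvalues of $A$ (which of $\pm1$ gives which number is not recorded). *)

theory Defs
  imports Complex_Main "HOL-Library.Multiset" "Jordan_Normal_Form.Matrix_Kernel" "Jordan_Normal_Form.Char_Poly"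
begin

definition orth_group :: "nat \<Rightarrow> real mat set" where
  "orth_group m = {A. A \<in> carrier_mat m m \<and> A * transpose_mat A = 1\<^sub>m m \<and> transpose_mat A * A = 1\<^sub>m m}"

definition eig_kernel_dim :: "'a::field mat \<Rightarrow> 'a \<Rightarrow> nat" where
  "eig_kernel_dim A l = kernel_dim (A - l \<cdot>\<^sub>m 1\<^sub>m (dim_row A))"

definition cmat :: "real mat \<Rightarrow> complex mat" where
  "cmat A = map_mat complex_of_real A"

definition conj_pairs :: "real mat \<Rightarrow> complex set set" where
  "conj_pairs A = {{l, cnj l} | l. eigenvalue (cmat A) l \<and> Im l \<noteq> 0}"

text \<open>Segre symbol: (a) multiset of complex dimensions dim_C ker(A - l) over the distinct
  conjugate pairs {l, cnj l} of non-real eigenvalues; (b) multiset of dim ker(A - e) over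
  e in {1,-1} which are eigenvalues.\<close>
definition segre_symbol :: "real mat \<Rightarrow> nat multiset \<times> nat multiset" where
  "segre_symbol A =
    (image_mset (\<lambda>P. eig_kernel_dim (cmat A) (SOME l. l \<in> P)) (mset_set (conj_pairs A)),
     image_mset (\<lambda>e. eig_kernel_dim A e) (mset_set {e \<in> {1, -1}. eigenvalue A e}))"

definition partition_number :: "nat \<Rightarrow> nat" where
  "partition_number k = card {M :: nat multiset. 0 \<notin># M \<and> sum_mset M = k}"

definition s_count :: "nat \<Rightarrow> nat" where
  "s_count n = (\<Sum>j = 0..(n + 1) div 2. partition_number j * ((n + 1) div 2 - j + 1))"

end

theory Submission
  imports Defs "Jordan_Normal_Form.Jordan_Normal_Form_Existence" "Jordan_Normal_Form.Jordan_Normal_Form_Uniqueness"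
begin

lemma kernel_dim_mat_kernel_cong:
  assumes "mat_kernel A = mat_kernel B" "dim_col A = dim_col B"
  shows "kernel_dim A = kernel_dim B"
  unfolding kernel_dim_def using assms by simp

context field_hom
begin

lemma hom_eq_0_iff: "hom x = 0 \<longleftrightarrow> x = 0"
proof
  assume h: "hom x = 0"
  show "x = 0"
  proof (rule ccontr)
    assume "x \<noteq> 0"
    hence "x * inverse x = 1" by simp
    hence "hom (x * inverse x) = 1" by simp
    hence "hom x * hom (inverse x) = 1" by (simp only: hom_mult)
    with h show False by simp
  qed
qed simp

lemma hom_eq_1_iff: "hom x = 1 \<longleftrightarrow> x = 1"
proof -
  have "hom x = 1 \<longleftrightarrow> hom (x - 1) = 0" by (simp add: hom_distribs)
  also have "\<dots> \<longleftrightarrow> x = 1" using hom_eq_0_iff by simp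
  finally show ?thesis .
qed

lemma pivot_fun_hom: assumes "pivot_fun B f nc" "dim_col B = nc"
  shows "pivot_fun (mat\<^sub>h B) f nc"
proof -
  have d: "dim_row B = dim_row B" by simp
  note p = pivot_funD[OF d assms(1)]
  show ?thesis
  proof (rule pivot_funI[of _ "dim_row B"])
    fix i j assume i: "i < dim_row B" and j: "j < f i"
    from p(1)[OF i] j assms(2) have "j < dim_col B" by simp
    then show "mat\<^sub>h B $$ (i,j) = 0" using p(2)[OF i j] i by simp
  next
    fix i assume i: "i < dim_row B" and f: "f i < nc"
    then show "mat\<^sub>h B $$ (i,f i) = 1" using p(4)[OF i f] assms(2) by simp
  next
    fix i i' assume i: "i < dim_row B" and f: "f i < nc" and "i' < dim_row B" "i' \<noteq> i"
    then show "mat\<^sub>h B $$ (i',f i) = 0" using p(5)[OF i f] assms(2) by simp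
  qed (insert p(1,3), auto)
qed

lemma row_hom_nonzero: assumes B: "B \<in> carrier_mat nr nc" and i: "i < nr"
  shows "(row (mat\<^sub>h B) i \<noteq> 0\<^sub>v nc) = (row B i \<noteq> 0\<^sub>v nc)"
proof -
  have "(row (mat\<^sub>h B) i = 0\<^sub>v nc) = (\<forall>j<nc. hom (B $$ (i,j)) = 0)"
    using B i by (auto simp: vec_eq_iff)
  also have "\<dots> = (\<forall>j<nc. B $$ (i,j) = 0)" by (simp add: hom_eq_0_iff)
  also have "\<dots> = (row B i = 0\<^sub>v nc)"
    using B i by (auto simp: vec_eq_iff)
  finally show ?thesis by simp
qed

lemma kernel_dim_hom: assumes A: "A \<in> carrier_mat nr nc"
  shows "kernel_dim (mat\<^sub>h A) = kernel_dim A"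
proof -
  define B where "B = gauss_jordan_single A"
  note g = gauss_jordan_single[OF A B_def[symmetric]]
  from g(4) obtain P Q where BPA: "B = P * A" and P: "P \<in> carrier_mat nr nr" and Q: "Q \<in> carrier_mat nr nr"
    and QP: "Q * P = 1\<^sub>m nr" by auto
  have B: "B \<in> carrier_mat nr nc" by (rule g(2))
  from g(3) obtain f where piv: "pivot_fun B f nc" unfolding row_echelon_form_def using B by auto
  have hA: "mat\<^sub>h A \<in> carrier_mat nr nc" using A by simp
  have hB: "mat\<^sub>h B \<in> carrier_mat nr nc" using B by simp
  have hP: "mat\<^sub>h P \<in> carrier_mat nr nr" using P by simp
  have hQ: "mat\<^sub>h Q \<in> carrier_mat nr nr" using Q by simp
  have hBPA: "mat\<^sub>h B = mat\<^sub>h P * mat\<^sub>h A" unfolding BPA by (rule mat_hom_mult[OF P A])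
  have hQP: "mat\<^sub>h Q * mat\<^sub>h P = 1\<^sub>m nr" using mat_hom_mult[OF Q P] QP by (simp add: mat_hom_one)
  have ref: "row_echelon_form (mat\<^sub>h B)" unfolding row_echelon_form_def using pivot_fun_hom[OF piv]  B by auto
  have "kernel_dim (mat\<^sub>h A) = kernel_dim (mat\<^sub>h B)"
    unfolding hBPA using mat_kernel_mult_eq[OF hA hP hQ hQP] hA hP
    by (intro kernel_dim_mat_kernel_cong, auto)
  also have "\<dots> = nc - card {i. i < nr \<and> row (mat\<^sub>h B) i \<noteq> 0\<^sub>v nc}"
    using find_base_vectors(6)[OF ref hB] hB unfolding kernel_dim_def by simp
  also have "{i. i < nr \<and> row (mat\<^sub>h B) i \<noteq> 0\<^sub>v nc} = {i. i < nr \<and> row B i \<noteq> 0\<^sub>v nc}"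
    using row_hom_nonzero[OF B] by auto
  also have "nc - card \<dots> = kernel_dim B"
    using find_base_vectors(6)[OF g(3) B] B unfolding kernel_dim_def by simp
  also have "\<dots> = kernel_dim A"
    unfolding BPA using mat_kernel_mult_eq[OF A P Q QP] A P
    by (intro kernel_dim_mat_kernel_cong, auto)
  finally show ?thesis .
qed

end

lemma cmat_carrier[simp]: "A \<in> carrier_mat n m \<Longrightarrow> cmat A \<in> carrier_mat n m"
  unfolding cmat_def by simp
lemma cmat_dims[simp]: "dim_row (cmat A) = dim_row A" "dim_col (cmat A) = dim_col A"
  unfolding cmat_def by auto
lemma cmat_index[simp]: "i < dim_row A \<Longrightarrow> j < dim_col A \<Longrightarrow> cmat A $$ (i,j) = complex_of_real (A $$ (i,j))"
  unfolding cmat_def by simp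

lemma cmat_mult: "A \<in> carrier_mat n k \<Longrightarrow> B \<in> carrier_mat k m \<Longrightarrow> cmat (A * B) = cmat A * cmat B"
  unfolding cmat_def by (rule of_real_hom.mat_hom_mult)
lemma cmat_transpose: "cmat (transpose_mat A) = transpose_mat (cmat A)"
  unfolding cmat_def by (simp add: map_mat_transpose)
lemma cmat_one: "cmat (1\<^sub>m n) = 1\<^sub>m n"
  unfolding cmat_def by (rule of_real_hom.mat_hom_one)

lemma orth_carrier: "A \<in> orth_group m \<Longrightarrow> A \<in> carrier_mat m m"
  unfolding orth_group_def by auto

lemma orth_cmat: assumes "A \<in> orth_group m"
  shows "transpose_mat (cmat A) * cmat A = 1\<^sub>m m" "cmat A * transpose_mat (cmat A) = 1\<^sub>m m"
proof -
  have A: "A \<in> carrier_mat m m" and 1: "transpose_mat A * A = 1\<^sub>m m" and 2: "A * transpose_mat A = 1\<^sub>m m"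
    using assms unfolding orth_group_def by auto
  have At: "transpose_mat A \<in> carrier_mat m m" using A by simp
  show "transpose_mat (cmat A) * cmat A = 1\<^sub>m m"
    using cmat_mult[OF At A] 1 by (simp add: cmat_transpose cmat_one)
  show "cmat A * transpose_mat (cmat A) = 1\<^sub>m m"
    using cmat_mult[OF A At] 2 by (simp add: cmat_transpose cmat_one)
qed

lemma cmat_conj_mult_vec: assumes A: "A \<in> carrier_mat nr nc" and x: "x \<in> carrier_vec nc"
  shows "cmat A *\<^sub>v conjugate x = conjugate (cmat A *\<^sub>v x)"
proof (rule eq_vecI)
  show "dim_vec (cmat A *\<^sub>v conjugate x) = dim_vec (conjugate (cmat A *\<^sub>v x))" by simp
  fix i assume "i < dim_vec (conjugate (cmat A *\<^sub>v x))"
  hence i: "i < nr" using A by simp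
  have "(cmat A *\<^sub>v conjugate x) $ i = (\<Sum>j = 0..<nc. complex_of_real (A $$ (i,j)) * cnj (x $ j))"
    using A x i by (simp add: scalar_prod_def)
  also have "\<dots> = cnj (\<Sum>j = 0..<nc. complex_of_real (A $$ (i,j)) * x $ j)"
    by simp
  also have "\<dots> = conjugate (cmat A *\<^sub>v x) $ i"
    using A x i by (simp add: scalar_prod_def)
  finally show "(cmat A *\<^sub>v conjugate x) $ i = conjugate (cmat A *\<^sub>v x) $ i" .
qed

lemma cmat_transpose_conj_mult_vec: assumes A: "A \<in> carrier_mat nr nc" and x: "x \<in> carrier_vec nr"
  shows "transpose_mat (cmat A) *\<^sub>v conjugate x = conjugate (transpose_mat (cmat A) *\<^sub>v x)"
  using cmat_conj_mult_vec[of "transpose_mat A" nc nr x] A x by (simp add: cmat_transpose)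

lemma unitary_sprod: assumes O: "A \<in> orth_group m" and v: "v \<in> carrier_vec m" and w: "w \<in> carrier_vec m"
  shows "(cmat A *\<^sub>v v) \<bullet>c (cmat A *\<^sub>v w) = v \<bullet>c w"
proof -
  let ?U = "cmat A"
  have A: "A \<in> carrier_mat m m" using O by (rule orth_carrier)
  have U: "?U \<in> carrier_mat m m" using A by simp
  have Ut: "transpose_mat ?U \<in> carrier_mat m m" using U by simp
  have cw: "conjugate w \<in> carrier_vec m" using w by simp
  have "(?U *\<^sub>v v) \<bullet>c (?U *\<^sub>v w) = (?U *\<^sub>v v) \<bullet> (?U *\<^sub>v conjugate w)"
    using cmat_conj_mult_vec[OF A w] by simp
  also have "\<dots> = v \<bullet> (transpose_mat ?U *\<^sub>v (?U *\<^sub>v conjugate w))"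
    using transpose_vec_mult_scalar[OF Ut, of "?U *\<^sub>v conjugate w" v] U v cw by simp
  also have "transpose_mat ?U *\<^sub>v (?U *\<^sub>v conjugate w) = (transpose_mat ?U * ?U) *\<^sub>v conjugate w"
    using Ut U cw by simp
  also have "\<dots> = conjugate w" using orth_cmat(1)[OF O] cw by simp
  finally show ?thesis by simp
qed

lemma char_matrix_mult_vec: assumes U: "U \<in> carrier_mat n n" and v: "v \<in> carrier_vec n"
  shows "char_matrix U l *\<^sub>v v = U *\<^sub>v v - l \<cdot>\<^sub>v v"
proof (rule eq_vecI)
  fix i assume "i < dim_vec (U *\<^sub>v v - l \<cdot>\<^sub>v v)"
  hence i: "i < n" using U v by simp
  have "(\<Sum>ia = 0..<n. - (l * (v $ ia * (if ia = i then 1 else 0)))) = (\<Sum>ia = 0..<n. (if ia = i then - (l * v $ i) else 0))"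
    by (rule sum.cong, auto)
  also have "\<dots> = - (l * v $ i)" using i by simp
  finally show "(char_matrix U l *\<^sub>v v) $ i = (U *\<^sub>v v - l \<cdot>\<^sub>v v) $ i"
    using U v i by (auto simp: char_matrix_def scalar_prod_def sum_distrib_left algebra_simps)
qed (insert U v, auto simp: char_matrix_def)

lemma orth_eigenvalue_unit: assumes O: "A \<in> orth_group m" and ev: "eigenvector (cmat A) v l"
  shows "cmod l = 1"
proof -
  have A: "A \<in> carrier_mat m m" using O by (rule orth_carrier)
  from ev A have v: "v \<in> carrier_vec m" "v \<noteq> 0\<^sub>v m" "cmat A *\<^sub>v v = l \<cdot>\<^sub>v v"
    unfolding eigenvector_def by auto
  have "v \<bullet>c v = (cmat A *\<^sub>v v) \<bullet>c (cmat A *\<^sub>v v)" using unitary_sprod[OF O v(1) v(1)] by simp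
  also have "\<dots> = (l * cnj l) * (v \<bullet>c v)"
    unfolding v(3) using v(1) by (simp add: conjugate_smult_vec)
  finally have eq: "(l * cnj l - 1) * (v \<bullet>c v) = 0" by (simp add: algebra_simps)
  have "v \<bullet>c v \<noteq> 0" using conjugate_square_eq_0_vec[OF v(1)] v(2) by simp
  with eq have "l * cnj l = 1" by simp
  moreover have "complex_of_real ((cmod l)^2) = l * cnj l" by (rule complex_norm_square)
  ultimately have "complex_of_real ((cmod l)^2) = 1" by simp
  hence "(cmod l)^2 = 1" by (metis of_real_eq_1_iff)
  thus ?thesis using norm_ge_zero[of l] by (auto simp add: power2_eq_1_iff)
qed

lemma pow_mat_1: "A \<in> carrier_mat n n \<Longrightarrow> A ^\<^sub>m 1 = A"
  by simp
lemma pow_mat_2: "A \<in> carrier_mat n n \<Longrightarrow> A ^\<^sub>m 2 = A * A"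
  by (simp add: numeral_2_eq_2)

lemma orth_ker2: assumes O: "A \<in> orth_group m" and v: "v \<in> carrier_vec m"
  and NN: "char_matrix (cmat A) l *\<^sub>v (char_matrix (cmat A) l *\<^sub>v v) = 0\<^sub>v m"
  shows "char_matrix (cmat A) l *\<^sub>v v = 0\<^sub>v m"
proof (rule ccontr)
  let ?U = "cmat A"
  let ?N = "char_matrix ?U l"
  have A: "A \<in> carrier_mat m m" using O by (rule orth_carrier)
  have U: "?U \<in> carrier_mat m m" using A by simp
  have Ut: "transpose_mat ?U \<in> carrier_mat m m" using U by simp
  define w where "w = ?N *\<^sub>v v"
  have w: "w \<in> carrier_vec m" unfolding w_def by (rule mult_mat_vec_carrier[OF char_matrix_closed[OF U] v])
  have wdef: "w = ?U *\<^sub>v v - l \<cdot>\<^sub>v v" unfolding w_def by (rule char_matrix_mult_vec[OF U v])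
  assume "\<not> ?N *\<^sub>v v = 0\<^sub>v m"
  hence wne: "w \<noteq> 0\<^sub>v m" by (simp add: w_def)
  have "?N *\<^sub>v w = 0\<^sub>v m" using NN unfolding w_def .
  hence eq0: "?U *\<^sub>v w - l \<cdot>\<^sub>v w = 0\<^sub>v m"
    using char_matrix_mult_vec[OF U w, of l] by simp
  have Uw: "?U *\<^sub>v w = l \<cdot>\<^sub>v w"
  proof (rule eq_vecI)
    fix i assume "i < dim_vec (l \<cdot>\<^sub>v w)"
    hence i: "i < m" using w by simp
    from arg_cong[OF eq0, of "\<lambda>x. x $ i"] i U w
    show "(?U *\<^sub>v w) $ i = (l \<cdot>\<^sub>v w) $ i" by simp
  qed (insert A U w, simp)
  have ev: "eigenvector ?U w l" unfolding eigenvector_def using w wne Uw U by auto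
  have "cmod l = 1" by (rule orth_eigenvalue_unit[OF O ev])
  hence lcl: "cnj l * l = 1"
    using complex_norm_square[of l] by (simp add: mult.commute)
  have "w = (transpose_mat ?U * ?U) *\<^sub>v w" using orth_cmat(1)[OF O] w by simp
  also have "\<dots> = transpose_mat ?U *\<^sub>v (l \<cdot>\<^sub>v w)" using Ut U w Uw by simp
  also have "\<dots> = l \<cdot>\<^sub>v (transpose_mat ?U *\<^sub>v w)" using Ut w by (simp add: mult_mat_vec)
  finally have w2: "w = l \<cdot>\<^sub>v (transpose_mat ?U *\<^sub>v w)" .
  have Utw: "transpose_mat ?U *\<^sub>v w = cnj l \<cdot>\<^sub>v w"
  proof -
    have "cnj l \<cdot>\<^sub>v w = cnj l \<cdot>\<^sub>v (l \<cdot>\<^sub>v (transpose_mat ?U *\<^sub>v w))" by (rule arg_cong[OF w2])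
    also have "\<dots> = (cnj l * l) \<cdot>\<^sub>v (transpose_mat ?U *\<^sub>v w)" by (simp add: smult_smult_assoc)
    finally show ?thesis using lcl by simp
  qed
  have cw: "conjugate w \<in> carrier_vec m" using w by simp
  have Utcw: "transpose_mat ?U *\<^sub>v conjugate w = l \<cdot>\<^sub>v conjugate w"
    unfolding cmat_transpose_conj_mult_vec[OF A w] Utw by (simp add: conjugate_smult_vec)
  have "(?U *\<^sub>v v) \<bullet> conjugate w = conjugate w \<bullet> (?U *\<^sub>v v)"
    using U v cw by (intro comm_scalar_prod[of _ m], auto)
  also have "\<dots> = (transpose_mat ?U *\<^sub>v conjugate w) \<bullet> v"
    using transpose_vec_mult_scalar[OF U v cw] by simp
  also have "\<dots> = l * (conjugate w \<bullet> v)" unfolding Utcw using cw v by simp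
  also have "conjugate w \<bullet> v = v \<bullet> conjugate w" using cw v by (intro comm_scalar_prod[of _ m], auto)
  finally have Uvw: "(?U *\<^sub>v v) \<bullet> conjugate w = l * (v \<bullet> conjugate w)" .
  have "w \<bullet>c w = (?U *\<^sub>v v - l \<cdot>\<^sub>v v) \<bullet> conjugate w" by (simp add: wdef[symmetric])
  also have "\<dots> = (?U *\<^sub>v v) \<bullet> conjugate w - (l \<cdot>\<^sub>v v) \<bullet> conjugate w"
    by (rule minus_scalar_prod_distrib[of _ m], insert U v cw, auto)
  also have "\<dots> = 0" unfolding Uvw using v cw by simp
  finally have "w \<bullet>c w = 0" .
  with conjugate_square_eq_0_vec[OF w] wne show False by simp
qed

lemma orth_dim_gen_2_1: assumes O: "A \<in> orth_group m"
  shows "dim_gen_eigenspace (cmat A) l 2 = dim_gen_eigenspace (cmat A) l 1"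
proof -
  let ?U = "cmat A"
  let ?N = "char_matrix ?U l"
  have A: "A \<in> carrier_mat m m" using O by (rule orth_carrier)
  have U: "?U \<in> carrier_mat m m" using A by simp
  have N: "?N \<in> carrier_mat m m" using U by simp
  have NN: "?N * ?N \<in> carrier_mat m m" using N by simp
  have "mat_kernel (?N * ?N) = mat_kernel ?N"
  proof
    show "mat_kernel ?N \<subseteq> mat_kernel (?N * ?N)" by (rule mat_kernel_mult_subset[OF N N])
    show "mat_kernel (?N * ?N) \<subseteq> mat_kernel ?N"
    proof
      fix v assume "v \<in> mat_kernel (?N * ?N)"
      from mat_kernelD[OF NN this] have v: "v \<in> carrier_vec m" and z: "?N * ?N *\<^sub>v v = 0\<^sub>v m" by auto
      from z have "?N *\<^sub>v (?N *\<^sub>v v) = 0\<^sub>v m" using N v by simp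
      from orth_ker2[OF O v this] show "v \<in> mat_kernel ?N" using N v by (intro mat_kernelI, auto)
    qed
  qed
  thus ?thesis unfolding dim_gen_eigenspace_def pow_mat_2[OF N] pow_mat_1[OF N]
    by (intro kernel_dim_mat_kernel_cong, insert N, auto)
qed

lemma sum_list_eq_le_imp_eq: assumes "sum_list (map f xs) = sum_list (map g xs)"
  and "\<And>x. x \<in> set xs \<Longrightarrow> g x \<le> (f x :: nat)"
  shows "\<forall>x \<in> set xs. f x = g x"
  using assms
proof (induct xs)
  case (Cons a xs)
  have "sum_list (map g xs) \<le> sum_list (map f xs)" using Cons(3)
    by (intro sum_list_mono, auto)
  with Cons(2) Cons(3)[of a] have "f a = g a" by simp
  with Cons show ?case by auto
qed simp

lemma orth_diag: assumes O: "A \<in> orth_group m"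
  shows "\<exists>ds. jordan_nf (cmat A) (map (\<lambda>d. (1,d)) ds) \<and> length ds = m"
proof -
  let ?U = "cmat A"
  have A: "A \<in> carrier_mat m m" using O by (rule orth_carrier)
  have U: "?U \<in> carrier_mat m m" using A by simp
  from char_poly_factorized[OF U] obtain as where "char_poly ?U = (\<Prod>a\<leftarrow>as. [:- a, 1:])" by auto
  from jordan_nf_exists[OF U this] obtain n_as where jnf: "jordan_nf ?U n_as" by auto
  have one: "\<forall>(k,e) \<in> set n_as. k = 1"
  proof (intro ballI, clarify)
    fix k e assume ke: "(k,e) \<in> set n_as"
    let ?xs = "[(n, e')\<leftarrow>n_as . e' = e]"
    have e1: "dim_gen_eigenspace ?U e 2 = (\<Sum>n\<leftarrow>map fst ?xs. min 2 n)" by (rule dim_gen_eigenspace[OF jnf])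
    have e2: "dim_gen_eigenspace ?U e 1 = (\<Sum>n\<leftarrow>map fst ?xs. min 1 n)" by (rule dim_gen_eigenspace[OF jnf])
    have eq: "(\<Sum>n\<leftarrow>map fst ?xs. min 2 n) = (\<Sum>n\<leftarrow>map fst ?xs. min 1 n)"
      unfolding e1[symmetric] e2[symmetric] by (rule orth_dim_gen_2_1[OF O])
    have "\<forall>x \<in> set (map fst ?xs). min 2 x = min 1 x"
      by (rule sum_list_eq_le_imp_eq[where f="\<lambda>n. min 2 n" and g="\<lambda>n. min 1 n", OF eq]) simp
    moreover have "k \<in> set (map fst ?xs)" using ke by force
    moreover have "k \<noteq> 0" using jnf ke unfolding jordan_nf_def by force
    ultimately have "min 2 k = min 1 k" "k \<noteq> 0" by auto
    thus "k = 1" by (simp add: min_def split: if_splits)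
  qed
  define ds where "ds = map snd n_as"
  have nas: "n_as = map (\<lambda>d. (1,d)) ds" unfolding ds_def using one
    by (induct n_as, auto)
  from jnf[unfolded jordan_nf_def] have "similar_mat ?U (jordan_matrix n_as)" by auto
  then obtain P Q where "similar_mat_wit ?U (jordan_matrix n_as) P Q" unfolding similar_mat_def by auto
  from similar_mat_witD2(5)[OF U this] have "dim_row (jordan_matrix n_as) = m" by auto
  moreover have "sum_list (map fst (map (\<lambda>d. (1::nat,d)) ds)) = length ds" by (induct ds) auto
  ultimately have "length ds = m" unfolding nas by simp
  thus ?thesis using jnf nas by blast
qed

interpretation cnj_field_hom: field_hom cnj
  by (unfold_locales, auto)

lemma diag_char_poly: assumes "jordan_nf U (map (\<lambda>d. (1::nat,d)) ds)"
  shows "char_poly U = (\<Prod>d\<leftarrow>ds. [:-d, 1:])"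
proof -
  have "char_poly U = (\<Prod>(n,a)\<leftarrow>map (\<lambda>d. (1::nat,d)) ds. [:- a, 1:] ^ n)"
    by (rule jordan_nf_char_poly[OF assms])
  also have "\<dots> = (\<Prod>d\<leftarrow>ds. [:-d, 1:])" by (induct ds) auto
  finally show ?thesis .
qed

lemma poly_prod_lin: "poly (\<Prod>d\<leftarrow>ds. [:-d, 1:]) (l :: 'a :: idom) = 0 \<longleftrightarrow> l \<in> set ds"
  by (induct ds) auto

lemma diag_eigenvalue: assumes U: "U \<in> carrier_mat n n"
  and jnf: "jordan_nf U (map (\<lambda>d. (1::nat,d)) (ds :: 'a :: field list))"
  shows "eigenvalue U l \<longleftrightarrow> l \<in> set ds"
  unfolding eigenvalue_root_char_poly[OF U] diag_char_poly[OF jnf] poly_prod_lin ..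

lemma eig_char_matrix: assumes U: "U \<in> carrier_mat n n"
  shows "U - l \<cdot>\<^sub>m 1\<^sub>m (dim_row U) = char_matrix U l"
  unfolding char_matrix_def using U by (intro eq_matI, auto)

lemma diag_kernel: assumes U: "U \<in> carrier_mat n n"
  and jnf: "jordan_nf U (map (\<lambda>d. (1::nat,d)) (ds :: 'a :: field list))"
  shows "eig_kernel_dim U l = count (mset ds) l"
proof -
  have "eig_kernel_dim U l = dim_gen_eigenspace U l 1"
    unfolding eig_kernel_dim_def dim_gen_eigenspace_def eig_char_matrix[OF U]
    using pow_mat_1[OF char_matrix_closed[OF U]] by simp
  also have "\<dots> = (\<Sum>n\<leftarrow>map fst [(n, e)\<leftarrow>map (\<lambda>d. (1::nat,d)) ds . e = l]. min 1 n)"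
    by (rule dim_gen_eigenspace[OF jnf])
  also have "\<dots> = count (mset ds) l"
    by (induct ds) auto
  finally show ?thesis .
qed

lemma cmat_char: assumes A: "A \<in> carrier_mat n n"
  shows "cmat (A - e \<cdot>\<^sub>m 1\<^sub>m (dim_row A)) = cmat A - complex_of_real e \<cdot>\<^sub>m 1\<^sub>m (dim_row (cmat A))"
  unfolding cmat_def using A by (intro eq_matI, auto)

lemma eig_kernel_dim_cmat: assumes A: "A \<in> carrier_mat n n"
  shows "eig_kernel_dim A e = eig_kernel_dim (cmat A) (complex_of_real e)"
proof -
  have C: "A - e \<cdot>\<^sub>m 1\<^sub>m (dim_row A) \<in> carrier_mat n n" using A by auto
  show ?thesis unfolding eig_kernel_dim_def cmat_char[OF A, symmetric]
    using of_real_hom.kernel_dim_hom[OF C] unfolding cmat_def by (rule sym)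
qed

lemma eigenvalue_cmat: assumes A: "A \<in> carrier_mat n n"
  shows "eigenvalue A e \<longleftrightarrow> eigenvalue (cmat A) (complex_of_real e)"
proof -
  have "eigenvalue (cmat A) (complex_of_real e) \<longleftrightarrow> poly (char_poly (cmat A)) (complex_of_real e) = 0"
    by (rule eigenvalue_root_char_poly[of _ n], insert A, simp)
  also have "char_poly (cmat A) = map_poly complex_of_real (char_poly A)"
    unfolding cmat_def by (rule of_real_hom.char_poly_hom[OF A])
  also have "poly \<dots> (complex_of_real e) = 0 \<longleftrightarrow> poly (char_poly A) e = 0" by simp
  also have "\<dots> \<longleftrightarrow> eigenvalue A e" by (rule eigenvalue_root_char_poly[OF A, symmetric])
  finally show ?thesis by simp
qed

lemma eig_kernel_dim_cnj: assumes A: "A \<in> carrier_mat n n"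
  shows "eig_kernel_dim (cmat A) (cnj l) = eig_kernel_dim (cmat A) l"
proof -
  have C: "cmat A - l \<cdot>\<^sub>m 1\<^sub>m n \<in> carrier_mat n n" using A by auto
  have "map_mat cnj (cmat A - l \<cdot>\<^sub>m 1\<^sub>m n) = cmat A - cnj l \<cdot>\<^sub>m 1\<^sub>m n"
    using A unfolding cmat_def by (intro eq_matI, auto)
  thus ?thesis unfolding eig_kernel_dim_def using cnj_field_hom.kernel_dim_hom[OF C] A by simp
qed

definition CPs :: "complex multiset \<Rightarrow> complex set set" where
  "CPs D = {{l, cnj l} | l. l \<in># D \<and> Im l \<noteq> 0}"
definition Es :: "complex multiset \<Rightarrow> real set" where
  "Es D = {e \<in> {1, -1}. complex_of_real e \<in># D}"
definition symb :: "complex multiset \<Rightarrow> nat multiset \<times> nat multiset" where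
  "symb D = (image_mset (\<lambda>P. count D (SOME l. l \<in> P)) (mset_set (CPs D)),
             image_mset (\<lambda>e. count D (complex_of_real e)) (mset_set (Es D)))"
definition Tset :: "nat \<Rightarrow> (nat multiset \<times> nat multiset) set" where
  "Tset m = {(a,b). 0 \<notin># a \<and> 0 \<notin># b \<and> size b \<le> 2 \<and> 2 * sum_mset a + sum_mset b = m}"

lemma sum_mset_image_mset_set: "sum_mset (image_mset f (mset_set A)) = sum f A"
  by (rule sum_unfold_sum_mset[symmetric])

lemma CPs_finite: "finite (CPs D)"
proof -
  have "CPs D = (\<lambda>l. {l, cnj l}) ` {l. l \<in># D \<and> Im l \<noteq> 0}" unfolding CPs_def by auto
  thus ?thesis by simp
qed

lemma Es_finite: "finite (Es D)" unfolding Es_def by auto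

lemma size_count_sum: "size D = sum (count D) (set_mset D)"
  by (rule size_multiset_overloaded_eq)

lemma some_in_pair: assumes c: "\<And>l. count D (cnj l) = count D l"
  shows "count D (SOME x. x \<in> {l, cnj l}) = count D l"
proof -
  have "(SOME x. x \<in> {l, cnj l}) \<in> {l, cnj l}" by (rule someI[of _ l], simp)
  thus ?thesis using c[of l] by auto
qed

lemma symb_in_T:
  assumes u: "\<And>x. x \<in># D \<Longrightarrow> cmod x = 1"
  and c: "\<And>l. count D (cnj l) = count D l"
  shows "symb D \<in> Tset (size D)"
proof -
  define f where "f = (\<lambda>P. count D (SOME l. l \<in> P))"
  define g where "g = (\<lambda>e. count D (complex_of_real e))"
  have CPsD: "P \<in> CPs D \<Longrightarrow> \<exists>l. P = {l, cnj l} \<and> l \<in># D \<and> Im l \<noteq> 0" for P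
    unfolding CPs_def by auto
  have fP: "f {l, cnj l} = count D l" for l unfolding f_def by (rule some_in_pair[OF c])
  have a0: "0 \<notin># image_mset f (mset_set (CPs D))"
  proof
    assume "0 \<in># image_mset f (mset_set (CPs D))"
    then obtain P where P: "P \<in> CPs D" and "f P = 0" using CPs_finite by auto
    from CPsD[OF P] obtain l where "P = {l, cnj l}" "l \<in># D" by auto
    with \<open>f P = 0\<close> fP have "count D l = 0" by auto
    with \<open>l \<in># D\<close> show False by (simp add: not_in_iff[symmetric])
  qed
  have b0: "0 \<notin># image_mset g (mset_set (Es D))"
    using Es_finite unfolding g_def Es_def by (auto simp: not_in_iff[symmetric])
  have bs: "size (image_mset g (mset_set (Es D))) \<le> 2"
  proof -
    have "Es D \<subseteq> {1, -1}" unfolding Es_def by auto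
    hence "card (Es D) \<le> card {1, -1 :: real}" by (intro card_mono, auto)
    thus ?thesis by simp
  qed
  define NR where "NR = {x \<in> set_mset D. Im x \<noteq> 0}"
  define R where "R = {x \<in> set_mset D. Im x = 0}"
  have split: "set_mset D = NR \<union> R" "NR \<inter> R = {}" unfolding NR_def R_def by auto
  have "size D = sum (count D) NR + sum (count D) R"
    unfolding size_count_sum split(1) by (rule sum.union_disjoint, insert split, auto simp: NR_def R_def)
  also have "NR = \<Union> (CPs D)"
  proof
    show "NR \<subseteq> \<Union> (CPs D)" unfolding NR_def CPs_def by blast
    show "\<Union> (CPs D) \<subseteq> NR"
    proof
      fix x assume "x \<in> \<Union> (CPs D)"
      then obtain l where "x \<in> {l, cnj l}" "l \<in># D" "Im l \<noteq> 0" unfolding CPs_def by auto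
      moreover have "cnj l \<in># D" using c[of l] \<open>l \<in># D\<close> by (metis not_in_iff)
      ultimately show "x \<in> NR" unfolding NR_def by auto
    qed
  qed
  also have "sum (count D) (\<Union> (CPs D)) = sum (sum (count D)) (CPs D)"
  proof (subst sum.Union_disjoint)
    show "\<forall>A\<in>CPs D. finite A" unfolding CPs_def by auto
    show "\<forall>A\<in>CPs D. \<forall>B\<in>CPs D. A \<noteq> B \<longrightarrow> A \<inter> B = {}"
      unfolding CPs_def by auto
  qed simp
  also have "\<dots> = sum (\<lambda>P. 2 * f P) (CPs D)"
  proof (rule sum.cong[OF refl])
    fix P assume P: "P \<in> CPs D"
    from CPsD[OF P] obtain l where Pl: "P = {l, cnj l}" and l: "Im l \<noteq> 0" by auto
    have "l \<noteq> cnj l" using l by (auto simp: complex_eq_iff)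
    hence "sum (count D) P = count D l + count D (cnj l)" unfolding Pl by simp
    also have "\<dots> = 2 * f P" unfolding Pl fP c by simp
    finally show "sum (count D) P = 2 * f P" .
  qed
  also have "\<dots> = 2 * sum_mset (image_mset f (mset_set (CPs D)))"
    by (simp add: sum_mset_image_mset_set sum_distrib_left)
  also have "R = complex_of_real ` Es D"
  proof
    show "complex_of_real ` Es D \<subseteq> R" unfolding R_def Es_def by auto
    show "R \<subseteq> complex_of_real ` Es D"
    proof
      fix x assume x: "x \<in> R"
      hence xD: "x \<in># D" and im: "Im x = 0" unfolding R_def by auto
      have "x = complex_of_real (Re x)" using im by (simp add: complex_eq_iff)
      moreover have "\<bar>Re x\<bar> = 1" using u[OF xD] im by (simp add: cmod_def)
      hence "Re x \<in> {1, -1}" by auto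
      ultimately show "x \<in> complex_of_real ` Es D" unfolding Es_def using xD by force
    qed
  qed
  also have "sum (count D) (complex_of_real ` Es D) = sum g (Es D)"
    unfolding g_def by (subst sum.reindex, auto simp: inj_on_def)
  also have "\<dots> = sum_mset (image_mset g (mset_set (Es D)))" by (simp add: sum_mset_image_mset_set)
  finally show ?thesis unfolding symb_def Tset_def f_def[symmetric] g_def[symmetric]
    using a0 b0 bs by simp
qed

lemma segre_eq: assumes A: "A \<in> carrier_mat n n"
  and jnf: "jordan_nf (cmat A) (map (\<lambda>d. (1::nat,d)) ds)"
  shows "segre_symbol A = symb (mset ds)"
proof -
  have U: "cmat A \<in> carrier_mat n n" using A by simp
  note ev = diag_eigenvalue[OF U jnf]
  note kd = diag_kernel[OF U jnf]
  have cp: "conj_pairs A = CPs (mset ds)" unfolding conj_pairs_def CPs_def ev by simp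
  have es: "{e \<in> {1, -1}. eigenvalue A e} = Es (mset ds)"
    unfolding Es_def eigenvalue_cmat[OF A] ev by simp
  show ?thesis unfolding segre_symbol_def symb_def cp es kd eig_kernel_dim_cmat[OF A] ..
qed

lemma orth_in_T: assumes O: "A \<in> orth_group m"
  shows "segre_symbol A \<in> Tset m"
proof -
  have A: "A \<in> carrier_mat m m" using O by (rule orth_carrier)
  have U: "cmat A \<in> carrier_mat m m" using A by simp
  from orth_diag[OF O] obtain ds where jnf: "jordan_nf (cmat A) (map (\<lambda>d. (1,d)) ds)"
    and len: "length ds = m" by auto
  note ev = diag_eigenvalue[OF U jnf]
  note kd = diag_kernel[OF U jnf]
  have u: "cmod x = 1" if "x \<in># mset ds" for x
  proof -
    from that have "eigenvalue (cmat A) x" unfolding ev by simp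
    then obtain v where "eigenvector (cmat A) v x" unfolding eigenvalue_def by auto
    from orth_eigenvalue_unit[OF O this] show ?thesis .
  qed
  have c: "count (mset ds) (cnj l) = count (mset ds) l" for l
    using eig_kernel_dim_cnj[OF A, of l] unfolding kd .
  from symb_in_T[of "mset ds", OF u c] len
  show ?thesis unfolding segre_eq[OF A jnf] by simp
qed

lemma less2: "(i::nat) < 2 \<longleftrightarrow> i = 0 \<or> i = 1" by auto
lemma sum2: "sum f {0..<2::nat} = f 0 + f 1" by (simp add: numeral_2_eq_2)

definition rot :: "real \<Rightarrow> real mat" where
  "rot t = mat 2 2 (\<lambda>(i,j). if i = j then cos t else if i = 0 then - sin t else sin t)"
definition E1 :: "'a::zero \<Rightarrow> 'a mat" where
  "E1 e = mat 1 1 (\<lambda>_. e)"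

lemma rot_carrier[simp]: "rot t \<in> carrier_mat 2 2" unfolding rot_def by simp
lemma E1_carrier[simp]: "E1 e \<in> carrier_mat 1 1" unfolding E1_def by simp

lemma rot_orth: "rot t \<in> orth_group 2"
proof -
  have "rot t * transpose_mat (rot t) = 1\<^sub>m 2"
    by (rule eq_matI, auto simp: rot_def less2 scalar_prod_def sum2 power2_eq_square[symmetric])
  moreover have "transpose_mat (rot t) * rot t = 1\<^sub>m 2"
    by (rule eq_matI, auto simp: rot_def less2 scalar_prod_def sum2 power2_eq_square[symmetric])
  ultimately show ?thesis unfolding orth_group_def by simp
qed

lemma E1_orth: assumes "e * e = (1::real)" shows "E1 e \<in> orth_group 1"
proof -
  have "E1 e * transpose_mat (E1 e) = 1\<^sub>m 1" "transpose_mat (E1 e) * E1 e = 1\<^sub>m 1"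
    by (rule eq_matI, insert assms, auto simp: E1_def scalar_prod_def)+
  thus ?thesis unfolding orth_group_def by (simp add: E1_def)
qed

lemma cmat_E1: "cmat (E1 e) = E1 (complex_of_real e)"
  unfolding cmat_def E1_def by (rule eq_matI, auto)

lemma jordan_matrix_single: "jordan_matrix [(1, x)] = E1 x"
  unfolding jordan_matrix_def E1_def jordan_block_def by (rule eq_matI, auto)

lemma E1_jnf: "jordan_nf (E1 (x::'a::field)) [(1, x)]"
  unfolding jordan_nf_def jordan_matrix_single
  by (auto intro!: similar_mat_refl[of _ 1] simp: E1_def)

definition Dm :: "complex \<Rightarrow> complex mat" where
  "Dm l = mat 2 2 (\<lambda>(i,j). if i = j then (if i = 0 then l else cnj l) else 0)"
definition Pm :: "complex mat" where
  "Pm = mat 2 2 (\<lambda>(i,j). if i = 0 then 1 else if j = 0 then - \<i> else \<i>)"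
definition Qm :: "complex mat" where
  "Qm = mat 2 2 (\<lambda>(i,j). (if j = 0 then 1 else if i = 0 then \<i> else - \<i>) / 2)"

lemma jordan_matrix_pair: "jordan_matrix [(1, l), (1, cnj l)] = Dm l"
  unfolding jordan_matrix_def Dm_def jordan_block_def
  by (rule eq_matI, auto simp: less2)

lemma rot_similar: "similar_mat_wit (cmat (rot t)) (Dm (cis t)) Pm Qm"
proof (rule similar_mat_witI[of _ _ 2])
  show "Pm * Qm = 1\<^sub>m 2"
    by (rule eq_matI, auto simp: Pm_def Qm_def less2 scalar_prod_def sum2 complex_eq_iff)
  show "Qm * Pm = 1\<^sub>m 2"
    by (rule eq_matI, auto simp: Pm_def Qm_def less2 scalar_prod_def sum2 complex_eq_iff)
  show "cmat (rot t) = Pm * Dm (cis t) * Qm"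
    by (rule eq_matI, auto simp: Pm_def Qm_def Dm_def rot_def cmat_def less2 scalar_prod_def sum2 complex_eq_iff)
qed (auto simp: Pm_def Qm_def Dm_def)

lemma rot_jnf: "jordan_nf (cmat (rot t)) [(1, cis t), (1, cnj (cis t))]"
  unfolding jordan_nf_def jordan_matrix_pair similar_mat_def using rot_similar by auto

lemma cmat_zero: "cmat (0\<^sub>m a b) = 0\<^sub>m a b" unfolding cmat_def by (rule eq_matI, auto)

lemma cmat_diag_block: "cmat (diag_block_mat Bs) = diag_block_mat (map cmat Bs)"
proof (induct Bs)
  case Nil show ?case by (simp add: cmat_zero)
next
  case (Cons A As)
  let ?B = "diag_block_mat As"
  have "cmat (diag_block_mat (A # As)) =
    four_block_mat (cmat A) (cmat (0\<^sub>m (dim_row A) (dim_col ?B))) (cmat (0\<^sub>m (dim_row ?B) (dim_col A))) (cmat ?B)"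
    unfolding cmat_def diag_block_mat.simps Let_def
    by (rule map_four_block_mat, auto)
  also have "\<dots> = diag_block_mat (map cmat (A # As))"
    unfolding cmat_zero by (simp add: Let_def Cons[symmetric])
  finally show ?case .
qed

lemma orth_four_block: assumes oA: "A \<in> orth_group k" and oB: "B \<in> orth_group r"
  shows "four_block_mat A (0\<^sub>m k r) (0\<^sub>m r k) B \<in> orth_group (k + r)"
proof -
  have A: "A \<in> carrier_mat k k" using orth_carrier[OF oA] .
  have B: "B \<in> carrier_mat r r" using orth_carrier[OF oB] .
  have A1: "A * transpose_mat A = 1\<^sub>m k" "transpose_mat A * A = 1\<^sub>m k" using oA unfolding orth_group_def by blast+
  have B1: "B * transpose_mat B = 1\<^sub>m r" "transpose_mat B * B = 1\<^sub>m r" using oB unfolding orth_group_def by blast+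
  have At: "transpose_mat A \<in> carrier_mat k k" using A by (simp only: transpose_carrier_mat)
  have Bt: "transpose_mat B \<in> carrier_mat r r" using B by (simp only: transpose_carrier_mat)
  have z1: "(0\<^sub>m k r :: real mat) \<in> carrier_mat k r" and z2: "(0\<^sub>m r k :: real mat) \<in> carrier_mat r k" by auto
  have T: "transpose_mat (four_block_mat A (0\<^sub>m k r) (0\<^sub>m r k) B) = four_block_mat (transpose_mat A) (0\<^sub>m k r) (0\<^sub>m r k) (transpose_mat B)"
    using transpose_four_block_mat[OF A z1 z2 B] by simp
  have 1: "four_block_mat A (0\<^sub>m k r) (0\<^sub>m r k) B * transpose_mat (four_block_mat A (0\<^sub>m k r) (0\<^sub>m r k) B) = 1\<^sub>m (k + r)"
    unfolding T mult_four_block_mat[OF A z1 z2 B At z1 z2 Bt] A1 B1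
    using A B At Bt by (simp flip: four_block_one_mat)
  have 2: "transpose_mat (four_block_mat A (0\<^sub>m k r) (0\<^sub>m r k) B) * four_block_mat A (0\<^sub>m k r) (0\<^sub>m r k) B = 1\<^sub>m (k + r)"
    unfolding T mult_four_block_mat[OF At z1 z2 Bt A z1 z2 B] A1 B1
    using A B At Bt by (simp flip: four_block_one_mat)
  have C: "four_block_mat A (0\<^sub>m k r) (0\<^sub>m r k) B \<in> carrier_mat (k + r) (k + r)"
    using four_block_carrier_mat[OF A B] .
  show ?thesis using 1 2 C unfolding orth_group_def by blast
qed

lemma diag_block_orth: assumes "\<And>B. B \<in> set Bs \<Longrightarrow> B \<in> orth_group (dim_row B)"
  shows "diag_block_mat Bs \<in> orth_group (sum_list (map dim_row Bs))"
  using assms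
proof (induct Bs)
  case Nil show ?case unfolding orth_group_def by (auto intro!: eq_matI)
next
  case (Cons A As)
  let ?B = "diag_block_mat As"
  let ?k = "dim_row A"
  let ?r = "sum_list (map dim_row As)"
  have oA: "A \<in> orth_group ?k" by (rule Cons(2), simp)
  have oB: "?B \<in> orth_group ?r" by (rule Cons(1), rule Cons(2), simp)
  have A: "A \<in> carrier_mat ?k ?k" using orth_carrier[OF oA] .
  have B: "?B \<in> carrier_mat ?r ?r" using orth_carrier[OF oB] .
  have dB: "dim_row ?B = ?r" "dim_col ?B = ?r" "dim_col A = ?k" using carrier_matD[OF A] carrier_matD[OF B] by blast+
  have M: "diag_block_mat (A # As) = four_block_mat A (0\<^sub>m ?k ?r) (0\<^sub>m ?r ?k) ?B"
    by (simp only: diag_block_mat.simps Let_def dB)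
  show ?case unfolding M using orth_four_block[OF oA oB] by simp
qed

definition valid_spec :: "real mat \<times> complex list \<Rightarrow> bool" where
  "valid_spec s = (fst s \<in> orth_group (dim_row (fst s)) \<and>
     jordan_nf (cmat (fst s)) (map (\<lambda>d. (1::nat,d)) (snd s)) \<and> dim_row (fst s) = length (snd s))"

lemma rot_valid: "valid_spec (rot t, [cis t, cnj (cis t)])"
proof -
  have d: "dim_row (rot t) = 2" by (simp add: rot_def)
  show ?thesis unfolding valid_spec_def fst_conv snd_conv d using rot_orth[of t] rot_jnf[of t]
    by (simp add: numeral_2_eq_2)
qed

lemma E1_valid: assumes "e * e = (1::real)" shows "valid_spec (E1 e, [complex_of_real e])"
proof -
  have d: "dim_row (E1 e) = 1" by (simp add: E1_def)
  show ?thesis unfolding valid_spec_def fst_conv snd_conv d cmat_E1 using E1_orth[OF assms] E1_jnf[of "complex_of_real e"]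
    by simp
qed

lemma dims_sum: "(\<And>s. s \<in> set specs \<Longrightarrow> dim_row (fst s) = length (snd s)) \<Longrightarrow>
  sum_list (map dim_row (map fst specs)) = length (concat (map snd specs))"
  by (induct specs) auto

lemma realize: assumes v: "\<And>s. s \<in> set specs \<Longrightarrow> valid_spec s"
  shows "diag_block_mat (map fst specs) \<in> orth_group (length (concat (map snd specs)))
    \<and> segre_symbol (diag_block_mat (map fst specs)) = symb (mset (concat (map snd specs)))"
proof -
  let ?A = "diag_block_mat (map fst specs)"
  have dims: "sum_list (map dim_row (map fst specs)) = length (concat (map snd specs))"
    by (rule dims_sum, insert v, auto simp: valid_spec_def)
  have O: "?A \<in> orth_group (length (concat (map snd specs)))"
    unfolding dims[symmetric]
  proof (rule diag_block_orth)
    fix B assume "B \<in> set (map fst specs)"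
    then obtain s where "s \<in> set specs" "B = fst s" by auto
    with v[of s] show "B \<in> orth_group (dim_row B)" unfolding valid_spec_def by auto
  qed
  let ?Ms = "map (\<lambda>s. (cmat (fst s), map (\<lambda>d. (1::nat,d)) (snd s))) specs"
  have "jordan_nf (diag_block_mat (map fst ?Ms)) (concat (map snd ?Ms))"
    by (rule jordan_nf_diag_block_mat, insert v, auto simp: valid_spec_def)
  moreover have "diag_block_mat (map fst ?Ms) = cmat ?A"
    unfolding cmat_diag_block by (simp add: o_def)
  moreover have "concat (map snd ?Ms) = map (\<lambda>d. (1::nat,d)) (concat (map snd specs))"
    by (simp add: map_concat o_def)
  ultimately have jnf: "jordan_nf (cmat ?A) (map (\<lambda>d. (1::nat,d)) (concat (map snd specs)))" by simp
  show ?thesis using O segre_eq[OF orth_carrier[OF O] jnf] by simp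
qed

lemma count_replicate_concat: "count (mset (concat (map snd (replicate k (X, L))))) x = k * count (mset L) x"
  by (induct k) auto

lemma count_specs: "count (mset (concat (map snd (concat (map (\<lambda>t. replicate (f t) (X t, L t)) xs))))) x
  = (\<Sum>t\<leftarrow>xs. f t * count (mset (L t)) x)"
proof (induct xs)
  case (Cons y ys)
  have "count (mset (concat (map snd (concat (map (\<lambda>t. replicate (f t) (X t, L t)) (y # ys)))))) x
    = count (mset (concat (map snd (replicate (f y) (X y, L y))))) x
      + count (mset (concat (map snd (concat (map (\<lambda>t. replicate (f t) (X t, L t)) ys))))) x"
    by simp
  thus ?case unfolding count_replicate_concat Cons by simp
qed simp

lemma length_specs: "length (concat (map snd (concat (map (\<lambda>t. replicate (f t) (X t, L t)) xs))))
  = (\<Sum>t\<leftarrow>xs. f t * length (L t))"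
  by (induct xs) (auto simp: length_concat sum_list_replicate o_def)

lemma specs_set: "s \<in> set (concat (map (\<lambda>t. replicate (f t) (X t, L t)) xs)) \<Longrightarrow> \<exists>t \<in> set xs. s = (X t, L t)"
  by auto

definition Part :: "nat \<Rightarrow> nat multiset set" where
  "Part j = {M. 0 \<notin># M \<and> sum_mset M = j}"
definition Bset :: "nat \<Rightarrow> nat multiset set" where
  "Bset N = {b. 0 \<notin># b \<and> size b \<le> 2 \<and> sum_mset b = N}"

lemma mem_le_sum_mset: "(x::nat) \<in># M \<Longrightarrow> x \<le> sum_mset M"
  by (metis le_add1 multi_member_split sum_mset.add_mset)

lemma size_le_sum_mset: "0 \<notin># (M :: nat multiset) \<Longrightarrow> size M \<le> sum_mset M"
proof (induct M)
  case (add x M)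
  hence "x \<noteq> 0" "size M \<le> sum_mset M" by auto
  thus ?case by simp
qed simp

lemma Part_finite: "finite (Part j)"
proof -
  have "Part j \<subseteq> mset ` {xs. set xs \<subseteq> {0..j} \<and> length xs \<le> j}"
  proof
    fix M assume M: "M \<in> Part j"
    obtain xs where xs: "mset xs = M" using ex_mset by blast
    have "set xs \<subseteq> {0..j}" using M mem_le_sum_mset unfolding Part_def xs[symmetric] by fastforce
    moreover have "length xs \<le> j" using M size_le_sum_mset[of M] unfolding Part_def xs[symmetric] by auto
    ultimately show "M \<in> mset ` {xs. set xs \<subseteq> {0..j} \<and> length xs \<le> j}" using xs by blast
  qed
  moreover have "finite {xs. set xs \<subseteq> {0..j::nat} \<and> length xs \<le> j}"
    by (rule finite_lists_length_le, simp)
  ultimately show ?thesis by (meson finite_imageI finite_subset)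
qed

definition gB :: "nat \<Rightarrow> nat \<Rightarrow> nat multiset" where
  "gB N i = (if i = 0 then (if N = 0 then {#} else {#N#}) else {#i, N - i#})"

lemma size2_ex: "size (b :: 'a multiset) = 2 \<Longrightarrow> \<exists>x y. b = {#x, y#}"
proof -
  assume "size b = 2"
  then obtain x c where b: "b = add_mset x c" using size_eq_Suc_imp_eq_union[of b 1] by auto
  with \<open>size b = 2\<close> have "size c = 1" by simp
  then obtain y where "c = {#y#}" using size_1_singleton_mset by blast
  with b show ?thesis by auto
qed

lemma Bset_eq: "Bset N = gB N ` {0..N div 2}"
proof
  show "gB N ` {0..N div 2} \<subseteq> Bset N"
    unfolding Bset_def gB_def by auto
  show "Bset N \<subseteq> gB N ` {0..N div 2}"
  proof
    fix b assume "b \<in> Bset N"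
    hence b0: "0 \<notin># b" and bs: "size b \<le> 2" and bN: "sum_mset b = N" unfolding Bset_def by auto
    have "size b = 0 \<or> size b = 1 \<or> size b = 2" using bs by linarith
    moreover {
      assume "size b = 0" hence "b = {#}" by simp
      hence "b = gB N 0" using bN unfolding gB_def by auto
    }
    moreover {
      assume "size b = 1"
      then obtain x where "b = {#x#}" using size_1_singleton_mset by blast
      hence "b = gB N 0" using bN b0 unfolding gB_def by auto
    }
    moreover {
      assume "size b = 2"
      then obtain x y where b: "b = {#x, y#}" using size2_ex by blast
      have "\<exists>i \<in> {0..N div 2}. b = gB N i"
      proof (cases "x \<le> y")
        case True
        hence "x \<in> {0..N div 2}" "b = gB N x" using b bN b0 unfolding gB_def by auto
        thus ?thesis by blast
      next
        case False
        hence "y \<in> {0..N div 2}" "b = gB N y" using b bN b0 unfolding gB_def by (auto simp: add_mset_commute)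
        thus ?thesis by blast
      qed
    }
    ultimately show "b \<in> gB N ` {0..N div 2}" by force
  qed
qed

lemma gB_inj: "inj_on (gB N) {0..N div 2}"
proof (rule inj_onI)
  fix i j assume i: "i \<in> {0..N div 2}" and j: "j \<in> {0..N div 2}" and eq: "gB N i = gB N j"
  show "i = j"
  proof (cases "i = 0 \<or> j = 0")
    case True
    then show ?thesis
    proof
      assume "i = 0"
      show "i = j"
      proof (rule ccontr)
        assume "i \<noteq> j"
        with \<open>i = 0\<close> have "j \<noteq> 0" by simp
        from arg_cong[OF eq, of size] \<open>i = 0\<close> \<open>j \<noteq> 0\<close> show False unfolding gB_def by (auto split: if_splits)
      qed
    next
      assume "j = 0"
      show "i = j"
      proof (rule ccontr)
        assume "i \<noteq> j"
        with \<open>j = 0\<close> have "i \<noteq> 0" by simp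
        from arg_cong[OF eq, of size] \<open>j = 0\<close> \<open>i \<noteq> 0\<close> show False unfolding gB_def by (auto split: if_splits)
      qed
    qed
  next
    case False
    hence eq2: "{#i, N - i#} = {#j, N - j#}" using eq unfolding gB_def by auto
    have "i \<in># {#j, N - j#}" unfolding eq2[symmetric] by simp
    hence "i = j \<or> i = N - j" by auto
    thus ?thesis using i j by auto
  qed
qed

lemma card_Bset: "card (Bset N) = N div 2 + 1"
  unfolding Bset_eq card_image[OF gB_inj] by simp

lemma Bset_finite: "finite (Bset N)" unfolding Bset_eq by simp

lemma Tset_eq: "Tset m = (\<Union>j \<in> {0..m div 2}. Part j \<times> Bset (m - 2 * j))"
proof
  show "Tset m \<subseteq> (\<Union>j \<in> {0..m div 2}. Part j \<times> Bset (m - 2 * j))"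
  proof (clarify)
    fix a b assume "(a,b) \<in> Tset m"
    hence a0: "0 \<notin># a" and b0: "0 \<notin># b" and bs: "size b \<le> 2" and e: "2 * sum_mset a + sum_mset b = m"
      unfolding Tset_def by auto
    define j where "j = sum_mset a"
    have e': "2 * j + sum_mset b = m" using e unfolding j_def .
    have "2 * j \<le> m" using e' by linarith
    hence "j \<le> m div 2" by presburger
    hence "j \<in> {0..m div 2}" by simp
    moreover have "a \<in> Part j" using a0 unfolding Part_def j_def by auto
    moreover have "b \<in> Bset (m - 2 * j)" using b0 bs e unfolding Bset_def j_def by auto
    ultimately show "(a,b) \<in> (\<Union>j \<in> {0..m div 2}. Part j \<times> Bset (m - 2 * j))" by blast
  qed
  show "(\<Union>j \<in> {0..m div 2}. Part j \<times> Bset (m - 2 * j)) \<subseteq> Tset m"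
  proof (clarify)
    fix j a b assume j: "j \<in> {0..m div 2}" and a: "a \<in> Part j" and b: "b \<in> Bset (m - 2 * j)"
    from a have a0: "0 \<notin># a" and sa: "sum_mset a = j" unfolding Part_def by auto
    from b have b0: "0 \<notin># b" and bs: "size b \<le> 2" and sb: "sum_mset b = m - 2 * j" unfolding Bset_def by auto
    have "2 * j \<le> m" using j by auto
    hence "2 * sum_mset a + sum_mset b = m" unfolding sa sb by simp
    thus "(a,b) \<in> Tset m" unfolding Tset_def using a0 b0 bs by simp
  qed
qed

lemma Part_disj: "i \<noteq> j \<Longrightarrow> Part i \<inter> Part j = {}" unfolding Part_def by auto

lemma card_Tset: "card (Tset m) = (\<Sum>j = 0..m div 2. card (Part j) * (m div 2 - j + 1))"
proof -
  have "card (Tset m) = (\<Sum>j = 0..m div 2. card (Part j \<times> Bset (m - 2 * j)))"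
    unfolding Tset_eq
    by (rule card_UN_disjoint, auto simp: Part_finite Bset_finite dest: Part_disj)
  also have "\<dots> = (\<Sum>j = 0..m div 2. card (Part j) * (m div 2 - j + 1))"
  proof (rule sum.cong[OF refl])
    fix j assume "j \<in> {0..m div 2}"
    hence "(m - 2 * j) div 2 = m div 2 - j" by auto
    thus "card (Part j \<times> Bset (m - 2 * j)) = card (Part j) * (m div 2 - j + 1)"
      by (simp add: card_cartesian_product card_Bset)
  qed
  finally show ?thesis .
qed

lemma card_Tset_s_count: "card (Tset (n + 1)) = s_count n"
  unfolding card_Tset s_count_def partition_number_def Part_def ..

definition th :: "nat \<Rightarrow> nat \<Rightarrow> real" where
  "th r t = pi * real (Suc t) / real (Suc r)"
definition lam :: "nat \<Rightarrow> nat \<Rightarrow> complex" where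
  "lam r t = cis (th r t)"
definition sg :: "nat \<Rightarrow> real" where
  "sg t = (if t = 0 then 1 else -1)"

definition specs1 :: "nat list \<Rightarrow> (real mat \<times> complex list) list" where
  "specs1 ks = concat (map (\<lambda>t. replicate (ks!t) (rot (th (length ks) t), [lam (length ks) t, cnj (lam (length ks) t)])) [0..<length ks])"
definition specs2 :: "nat list \<Rightarrow> (real mat \<times> complex list) list" where
  "specs2 bs = concat (map (\<lambda>t. replicate (bs!t) (E1 (sg t), [complex_of_real (sg t)])) [0..<length bs])"

lemma sum_list_upt_sum: "sum_list (map f [0..<n]) = sum f {0..<n}"
  using sum_set_upt_conv_sum_list_nat[of f 0 n] by simp

lemma th_bounds: assumes "t < r" shows "0 < th r t" "th r t < pi"
proof -
  have "real (Suc t) < real (Suc r)" using assms by simp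
  hence "real (Suc t) / real (Suc r) < 1" by simp
  hence "pi * (real (Suc t) / real (Suc r)) < pi * 1"
    by (intro mult_strict_left_mono, auto)
  thus "th r t < pi" unfolding th_def by simp
  show "0 < th r t" unfolding th_def by simp
qed

lemma lam_Im: "t < r \<Longrightarrow> Im (lam r t) > 0"
  unfolding lam_def using th_bounds[of t r] by (simp add: sin_gt_zero)

lemma lam_inj: assumes "t < r" "s < r" "lam r t = lam r s" shows "t = s"
proof -
  have "Re (lam r t) = Re (lam r s)" using assms(3) by simp
  hence "cos (th r t) = cos (th r s)" unfolding lam_def by simp
  hence "th r t = th r s" using th_bounds[OF assms(1)] th_bounds[OF assms(2)] cos_inj_pi[of "th r t" "th r s"]
    by (simp add: less_imp_le)
  hence "pi * real (Suc t) / real (Suc r) = pi * real (Suc s) / real (Suc r)" unfolding th_def .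
  hence "pi * real (Suc t) = pi * real (Suc s)" by (simp only: divide_cancel_right of_nat_eq_0_iff) simp
  hence "real (Suc t) = real (Suc s)" using pi_gt_zero by simp
  thus "t = s" by simp
qed

lemma lam_not_cnj: assumes "t < r" "s < r" shows "lam r t \<noteq> cnj (lam r s)"
proof
  assume "lam r t = cnj (lam r s)"
  hence "Im (lam r t) = - Im (lam r s)" by simp
  with lam_Im[OF assms(1)] lam_Im[OF assms(2)] show False by simp
qed


lemma count_pair: "count (mset [p, q]) x = (if p = x then 1 else 0) + (if q = x then 1 else 0)"
  by simp

lemma sg_inj: "u < 2 \<Longrightarrow> v < 2 \<Longrightarrow> sg u = sg v \<longleftrightarrow> u = v"
  unfolding sg_def by auto

lemma sg_sq: "sg u * sg u = 1" unfolding sg_def by auto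

lemma construct: assumes T: "(a,b) \<in> Tset m"
  shows "\<exists>A \<in> orth_group m. segre_symbol A = (a,b)"
proof -
  from T have a0: "0 \<notin># a" and b0: "0 \<notin># b" and bsz: "size b \<le> 2"
    and e: "2 * sum_mset a + sum_mset b = m" unfolding Tset_def by auto
  obtain ks where ks: "mset ks = a" using ex_mset by blast
  obtain bs where bs: "mset bs = b" using ex_mset by blast
  define r where "r = length ks"
  define lb where "lb = length bs"
  have lb2: "lb \<le> 2" using bsz unfolding lb_def bs[symmetric] by simp
  have kpos: "t < r \<Longrightarrow> ks ! t > 0" for t
    using a0 nth_mem[of t ks] unfolding ks[symmetric] r_def by (metis gr0I set_mset_mset)
  have bpos: "t < lb \<Longrightarrow> bs ! t > 0" for t
    using b0 nth_mem[of t bs] unfolding bs[symmetric] lb_def by (metis gr0I set_mset_mset)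
  define specs where "specs = specs1 ks @ specs2 bs"
  have valid: "valid_spec s" if "s \<in> set specs" for s
  proof -
    from that have "s \<in> set (specs1 ks) \<or> s \<in> set (specs2 bs)" unfolding specs_def by auto
    thus ?thesis
    proof
      assume "s \<in> set (specs1 ks)"
      then obtain t where "s = (rot (th (length ks) t), [lam (length ks) t, cnj (lam (length ks) t)])"
        unfolding specs1_def by auto
      thus ?thesis using rot_valid unfolding lam_def by simp
    next
      assume "s \<in> set (specs2 bs)"
      then obtain t where "s = (E1 (sg t), [complex_of_real (sg t)])"
        unfolding specs2_def by auto
      thus ?thesis using E1_valid[OF sg_sq] by simp
    qed
  qed
  from realize[OF valid] have O: "diag_block_mat (map fst specs) \<in> orth_group (length (concat (map snd specs)))"
    and S: "segre_symbol (diag_block_mat (map fst specs)) = symb (mset (concat (map snd specs)))" by auto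
  define D where "D = mset (concat (map snd specs))"
  have cnt: "count D x = (\<Sum>t\<in>{0..<r}. ks!t * count (mset [lam r t, cnj (lam r t)]) x)
     + (\<Sum>t\<in>{0..<lb}. bs!t * count (mset [complex_of_real (sg t)]) x)" for x
    unfolding D_def specs_def map_append concat_append mset_append count_union specs1_def specs2_def
      count_specs sum_list_upt_sum r_def lb_def ..
  have c_lam: "count D (lam r s) = ks ! s" if s: "s < r" for s
  proof -
    have 1: "(\<Sum>t\<in>{0..<r}. ks!t * count (mset [lam r t, cnj (lam r t)]) (lam r s)) = (\<Sum>t\<in>{0..<r}. if t = s then ks ! t else 0)"
    proof (rule sum.cong[OF refl])
      fix t assume "t \<in> {0..<r}"
      hence t: "t < r" by simp
      have "lam r t = lam r s \<longleftrightarrow> t = s" using lam_inj[OF t s] by auto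
      moreover have "cnj (lam r t) \<noteq> lam r s" using lam_not_cnj[OF s t] by metis
      ultimately show "ks!t * count (mset [lam r t, cnj (lam r t)]) (lam r s) = (if t = s then ks ! t else 0)"
        unfolding count_pair by auto
    qed
    have 2: "(\<Sum>t\<in>{0..<lb}. bs!t * count (mset [complex_of_real (sg t)]) (lam r s)) = 0"
    proof (intro sum.neutral ballI)
      fix t
      have "complex_of_real (sg t) \<noteq> lam r s"
      proof
        assume "complex_of_real (sg t) = lam r s"
        hence "Im (complex_of_real (sg t)) = Im (lam r s)" by simp
        thus False using lam_Im[OF s] by simp
      qed
      thus "bs!t * count (mset [complex_of_real (sg t)]) (lam r s) = 0" by simp
    qed
    show ?thesis unfolding cnt 1 2 using s by simp
  qed
  have c_cnj: "count D (cnj (lam r s)) = ks ! s" if s: "s < r" for s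
  proof -
    have 1: "(\<Sum>t\<in>{0..<r}. ks!t * count (mset [lam r t, cnj (lam r t)]) (cnj (lam r s))) = (\<Sum>t\<in>{0..<r}. if t = s then ks ! t else 0)"
    proof (rule sum.cong[OF refl])
      fix t assume "t \<in> {0..<r}"
      hence t: "t < r" by simp
      have "cnj (lam r t) = cnj (lam r s) \<longleftrightarrow> t = s" using lam_inj[OF t s] by auto
      moreover have "lam r t \<noteq> cnj (lam r s)" using lam_not_cnj[OF t s] by metis
      ultimately show "ks!t * count (mset [lam r t, cnj (lam r t)]) (cnj (lam r s)) = (if t = s then ks ! t else 0)"
        unfolding count_pair by auto
    qed
    have 2: "(\<Sum>t\<in>{0..<lb}. bs!t * count (mset [complex_of_real (sg t)]) (cnj (lam r s))) = 0"
    proof (intro sum.neutral ballI)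
      fix t
      have "complex_of_real (sg t) \<noteq> cnj (lam r s)"
      proof
        assume "complex_of_real (sg t) = cnj (lam r s)"
        hence "Im (complex_of_real (sg t)) = Im (cnj (lam r s))" by simp
        thus False using lam_Im[OF s] by simp
      qed
      thus "bs!t * count (mset [complex_of_real (sg t)]) (cnj (lam r s)) = 0" by simp
    qed
    show ?thesis unfolding cnt 1 2 using s by simp
  qed
  have c_sg: "count D (complex_of_real (sg u)) = bs ! u" if u: "u < lb" for u
  proof -
    have 1: "(\<Sum>t\<in>{0..<r}. ks!t * count (mset [lam r t, cnj (lam r t)]) (complex_of_real (sg u))) = 0"
    proof (intro sum.neutral ballI)
      fix t assume "t \<in> {0..<r}"
      hence t: "t < r" by simp
      have "lam r t \<noteq> complex_of_real (sg u)" "cnj (lam r t) \<noteq> complex_of_real (sg u)"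
      proof
        assume "lam r t = complex_of_real (sg u)"
        hence "Im (lam r t) = 0" by simp
        thus False using lam_Im[OF t] by simp
      next
        show "cnj (lam r t) \<noteq> complex_of_real (sg u)"
        proof
          assume "cnj (lam r t) = complex_of_real (sg u)"
          hence "Im (cnj (lam r t)) = 0" by simp
          thus False using lam_Im[OF t] by simp
        qed
      qed
      thus "ks!t * count (mset [lam r t, cnj (lam r t)]) (complex_of_real (sg u)) = 0"
        unfolding count_pair by auto
    qed
    have 2: "(\<Sum>t\<in>{0..<lb}. bs!t * count (mset [complex_of_real (sg t)]) (complex_of_real (sg u)))
      = (\<Sum>t\<in>{0..<lb}. if t = u then bs ! t else 0)"
    proof (rule sum.cong[OF refl])
      fix t assume "t \<in> {0..<lb}"
      hence "t < 2" using lb2 by simp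
      with u lb2 have "sg t = sg u \<longleftrightarrow> t = u" by (intro sg_inj, auto)
      thus "bs!t * count (mset [complex_of_real (sg t)]) (complex_of_real (sg u)) = (if t = u then bs ! t else 0)"
        by auto
    qed
    show ?thesis unfolding cnt 1 2 using u by simp
  qed
  have mem: "(\<exists>t<r. x = lam r t \<or> x = cnj (lam r t)) \<or> (\<exists>u<lb. x = complex_of_real (sg u))"
    if x: "x \<in># D" for x
  proof (rule ccontr)
    assume n: "\<not> ?thesis"
    have "count D x = 0" unfolding cnt
      by (rule add_is_0[THEN iffD2], rule conjI; rule sum.neutral; insert n, auto)
    with x show False by (simp add: not_in_iff[symmetric])
  qed
  define f where "f = (\<lambda>t. {lam r t, cnj (lam r t)})"
  have CP: "CPs D = f ` {0..<r}"
  proof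
    show "CPs D \<subseteq> f ` {0..<r}"
    proof
      fix P assume "P \<in> CPs D"
      then obtain l where P: "P = {l, cnj l}" and l: "l \<in># D" and im: "Im l \<noteq> 0" unfolding CPs_def by auto
      from mem[OF l] show "P \<in> f ` {0..<r}"
      proof
        assume "\<exists>t<r. l = lam r t \<or> l = cnj (lam r t)"
        then obtain t where t: "t < r" and "l = lam r t \<or> l = cnj (lam r t)" by auto
        hence "P = f t" unfolding P f_def by auto
        thus ?thesis using t by auto
      next
        assume "\<exists>u<lb. l = complex_of_real (sg u)"
        with im show ?thesis by auto
      qed
    qed
    show "f ` {0..<r} \<subseteq> CPs D"
    proof
      fix P assume "P \<in> f ` {0..<r}"
      then obtain t where t: "t < r" and P: "P = f t" by auto
      have "lam r t \<in># D" using c_lam[OF t] kpos[OF t] by (metis count_greater_zero_iff)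
      moreover have "Im (lam r t) \<noteq> 0" using lam_Im[OF t] by simp
      ultimately show "P \<in> CPs D" unfolding P f_def CPs_def by auto
    qed
  qed
  have ES: "Es D = sg ` {0..<lb}"
  proof
    show "Es D \<subseteq> sg ` {0..<lb}"
    proof
      fix e assume "e \<in> Es D"
      hence e: "complex_of_real e \<in># D" unfolding Es_def by auto
      from mem[OF e] show "e \<in> sg ` {0..<lb}"
      proof
        assume "\<exists>t<r. complex_of_real e = lam r t \<or> complex_of_real e = cnj (lam r t)"
        then obtain t where t: "t < r" and "complex_of_real e = lam r t \<or> complex_of_real e = cnj (lam r t)" by auto
        hence "Im (lam r t) = 0" by (metis Im_complex_of_real complex_cnj_cnj complex_cnj_complex_of_real)
        with lam_Im[OF t] show ?thesis by simp
      next
        assume "\<exists>u<lb. complex_of_real e = complex_of_real (sg u)"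
        thus ?thesis by auto
      qed
    qed
    show "sg ` {0..<lb} \<subseteq> Es D"
    proof
      fix e assume "e \<in> sg ` {0..<lb}"
      then obtain u where u: "u < lb" and e: "e = sg u" by auto
      have "complex_of_real e \<in># D" using c_sg[OF u] bpos[OF u] e by (metis count_greater_zero_iff)
      moreover have "e \<in> {1, -1}" unfolding e sg_def by auto
      ultimately show "e \<in> Es D" unfolding Es_def by auto
    qed
  qed
  have finj: "inj_on f {0..<r}"
  proof (rule inj_onI)
    fix t s assume t: "t \<in> {0..<r}" and s: "s \<in> {0..<r}" and eq: "f t = f s"
    hence "lam r t \<in> f s" unfolding f_def by auto
    hence "lam r t = lam r s \<or> lam r t = cnj (lam r s)" unfolding f_def by auto
    thus "t = s" using lam_inj[of t r s] lam_not_cnj[of t r s] t s by auto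
  qed
  have sginj: "inj_on sg {0..<lb}"
    by (rule inj_onI, insert lb2, auto simp: sg_inj)
  have first: "image_mset (\<lambda>P. count D (SOME l. l \<in> P)) (mset_set (CPs D)) = a"
  proof -
    have "image_mset (\<lambda>P. count D (SOME l. l \<in> P)) (mset_set (CPs D))
      = image_mset (\<lambda>P. count D (SOME l. l \<in> P)) (image_mset f (mset_set {0..<r}))"
      unfolding CP image_mset_mset_set[OF finj] ..
    also have "\<dots> = image_mset (\<lambda>t. ks ! t) (mset_set {0..<r})"
      unfolding image_mset.compositionality
    proof (rule image_mset_cong)
      fix t assume "t \<in># mset_set {0..<r}"
      hence t: "t < r" by simp
      have "(SOME l. l \<in> f t) \<in> f t" by (rule someI[of _ "lam r t"], simp add: f_def)
      hence "(SOME l. l \<in> f t) = lam r t \<or> (SOME l. l \<in> f t) = cnj (lam r t)" unfolding f_def by auto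
      thus "((\<lambda>P. count D (SOME l. l \<in> P)) \<circ> f) t = ks ! t"
        using c_lam[OF t] c_cnj[OF t] by auto
    qed
    also have "\<dots> = mset (map (\<lambda>t. ks ! t) [0..<r])" by simp
    also have "\<dots> = a" unfolding r_def map_nth ks ..
    finally show ?thesis .
  qed
  have second: "image_mset (\<lambda>e. count D (complex_of_real e)) (mset_set (Es D)) = b"
  proof -
    have "image_mset (\<lambda>e. count D (complex_of_real e)) (mset_set (Es D))
      = image_mset (\<lambda>e. count D (complex_of_real e)) (image_mset sg (mset_set {0..<lb}))"
      unfolding ES image_mset_mset_set[OF sginj] ..
    also have "\<dots> = image_mset (\<lambda>t. bs ! t) (mset_set {0..<lb})"
      unfolding image_mset.compositionality
      by (rule image_mset_cong, insert c_sg, auto)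
    also have "\<dots> = mset (map (\<lambda>t. bs ! t) [0..<lb])" by simp
    also have "\<dots> = b" unfolding lb_def map_nth bs ..
    finally show ?thesis .
  qed
  have len: "length (concat (map snd specs)) = m"
  proof -
    have "length (concat (map snd specs)) = (\<Sum>t\<leftarrow>[0..<r]. ks!t + ks!t) + (\<Sum>t\<leftarrow>[0..<lb]. bs!t)"
      unfolding specs_def specs1_def specs2_def map_append concat_append length_append length_specs r_def lb_def
      by simp
    also have "(\<Sum>t\<leftarrow>[0..<r]. ks!t + ks!t) = 2 * sum_list ks"
      unfolding sum_list_addf r_def map_nth by simp
    also have "(\<Sum>t\<leftarrow>[0..<lb]. bs!t) = sum_list bs" unfolding lb_def map_nth ..
    also have "2 * sum_list ks + sum_list bs = m"
      using e unfolding ks[symmetric] bs[symmetric] sum_mset_sum_list .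
    finally show ?thesis .
  qed
  have "segre_symbol (diag_block_mat (map fst specs)) = (a, b)"
    unfolding S D_def[symmetric] symb_def first second ..
  with O len show ?thesis by auto
qed

lemma image_eq_Tset: "segre_symbol ` orth_group m = Tset m"
proof
  show "segre_symbol ` orth_group m \<subseteq> Tset m" using orth_in_T by auto
  show "Tset m \<subseteq> segre_symbol ` orth_group m"
  proof
    fix x assume "x \<in> Tset m"
    moreover obtain a b where "x = (a,b)" by force
    ultimately obtain A where "A \<in> orth_group m" "segre_symbol A = (a,b)" using construct by blast
    thus "x \<in> segre_symbol ` orth_group m" using \<open>x = (a,b)\<close> by force
  qed
qed

theorem mainTheorem4:
  fixes n :: nat
  assumes "n \<ge> 1"
  shows "card (segre_symbol ` orth_group (n + 1)) = s_count n"
  unfolding image_eq_Tset by (rule card_Tset_s_count)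

end
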